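(* Let $\nu>2$, $\kappa\in(0,1/2-1/\nu)$, $C\ge0$ and $R,J:(0,\infty)\to[0,\infty)$, and define $\gamma(m,\delta)=C\,m\,(R(\delta)+J(\delta)m^{-\kappa})^2$ for $m\in\mathbb N$, $\delta>0$. Then: (i) For every $\delta>0$, the pair $(\nu/2,\gamma(\cdot,\delta))$ fulfills condition (S) with index $Q=2^{2\kappa}\in[1,2^{1-2/\nu})$. (ii) For every $\delta>0$, there is a constant $C'\ge0$ such that for each $0<\varepsilon\le1$, $\limsup_{n\to\infty}\gamma(\lfloor n\varepsilon\rfloor,\delta)/n\le C'\varepsilon$ (with the convention $\gamma(0,\delta)=0$). (iii) If $\lim_{\delta\downarrow0}R(\delta)=0$, then $\lim_{\delta\downarrow0}\limsup_{n\to\infty}\gamma(n,\delta)/n=0$.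
   Context: Condition (S): for $\alpha>1$ and $g:\mathbb N\to\mathbb R$, the pair $(\alpha,g)$ fulfills (S) with index $Q\in[1,2^{(\alpha-1)/\alpha})$ if (i) $g\ge0$, (ii) $g$ is nondecreasing, and (iii) $g(i)+g(j-i)\le Q g(j)$ for all $1\le i<j$. *)

theory Defs
  imports Complex_Main "HOL-Library.Extended_Real" "HOL-Library.Liminf_Limsup"
begin

text \<open>Condition (S) for a pair (alpha, g) with index Q. The domain of g is the positive
  integers {1,2,...}; the value g 0 is irrelevant.\<close>
definition cond_S :: "real \<Rightarrow> (nat \<Rightarrow> real) \<Rightarrow> real \<Rightarrow> bool" where
  "cond_S alpha g Q \<longleftrightarrow>
     alpha > 1 \<and> 1 \<le> Q \<and> Q < 2 powr ((alpha - 1) / alpha) \<and>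
     (\<forall>n\<ge>1. 0 \<le> g n) \<and>
     (\<forall>i j. 1 \<le> i \<longrightarrow> i \<le> j \<longrightarrow> g i \<le> g j) \<and>
     (\<forall>i j. 1 \<le> i \<longrightarrow> i < j \<longrightarrow> g i + g (j - i) \<le> Q * g j)"

definition gam :: "real \<Rightarrow> real \<Rightarrow> (real \<Rightarrow> real) \<Rightarrow> (real \<Rightarrow> real) \<Rightarrow> nat \<Rightarrow> real \<Rightarrow> real" where
  "gam C kappa R J m delta =
     (if m = 0 then 0 else C * real m * (R delta + J delta * (real m) powr (- kappa))^2)"

end

theory Submission
  imports Defs "HOL-Analysis.Convex"
begin

lemma conc_ineq:
  fixes a b p :: real
  assumes p: "0 < p" "p \<le> 1" and ab: "a > 0" "b > 0"
  shows "a powr p + b powr p \<le> 2 powr (1-p) * (a+b) powr p"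
proof -
  define h where "h = (a+b)/2"
  have h: "h > 0" using ab h_def by simp
  have y1: "a powr p * h powr (1-p) \<le> p*a + (1-p)*h"
    using Youngs_inequality_0[of p "1-p" a h] p ab h by simp
  have y2: "b powr p * h powr (1-p) \<le> p*b + (1-p)*h"
    using Youngs_inequality_0[of p "1-p" b h] p ab h by simp
  have "(a powr p + b powr p) * h powr (1-p) \<le> a + b"
  proof -
    have "p*a + (1-p)*h + (p*b + (1-p)*h) = a + b" unfolding h_def by (simp add: algebra_simps)
    thus ?thesis using y1 y2 by (simp only: distrib_right)
  qed
  hence "a powr p + b powr p \<le> (a+b) / h powr (1-p)"
    using h by (simp add: field_simps)
  also have "(a+b) / h powr (1-p) = (a+b) * h powr (p-1)"
    using h by (simp add: powr_diff powr_minus_divide divide_simps powr_add[symmetric])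
  also have "\<dots> = 2 powr (1-p) * (a+b) powr p"
  proof -
    have "h powr (p-1) = (a+b) powr (p-1) * 2 powr (1-p)"
      unfolding h_def using ab
      by (simp add: powr_divide powr_minus_divide powr_diff divide_simps)
    moreover have "(a+b) * (a+b) powr (p-1) = (a+b) powr p"
      using ab by (simp add: powr_add[symmetric] powr_mult_base)
    ultimately show ?thesis by (metis mult.assoc mult.commute)
  qed
  finally show ?thesis .
qed

lemma gam_expand:
  assumes "m \<ge> 1"
  shows "gam C kappa R J m delta = C * ((R delta)^2 * real m + 2 * R delta * J delta * real m powr (1-kappa)
           + (J delta)^2 * real m powr (1 - 2*kappa))"
proof -
  have m: "real m > 0" using assms by simp
  have e1: "real m * real m powr (-kappa) = real m powr (1-kappa)"
    using m by (simp add: powr_add[symmetric] powr_mult_base)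
  have e2: "real m * (real m powr (-kappa))^2 = real m powr (1-2*kappa)"
    using m by (simp add: power2_eq_square powr_add[symmetric] powr_mult_base)
  have "gam C kappa R J m delta = C * (real m * (R delta)^2 + 2 * R delta * J delta * (real m * real m powr (-kappa))
       + (J delta)^2 * (real m * (real m powr (-kappa))^2))"
    using assms unfolding gam_def by (simp add: power2_eq_square algebra_simps)
  thus ?thesis using e1 e2 by (simp add: algebra_simps)
qed

lemma part1:
  fixes nu kappa C :: real and R J :: "real \<Rightarrow> real"
  assumes nu: "nu > 2"
    and kappa: "0 < kappa" "kappa < 1/2 - 1/nu"
    and C: "C \<ge> 0"
    and RJ: "R delta \<ge> 0" "J delta \<ge> 0"
  shows "cond_S (nu/2) (\<lambda>m. gam C kappa R J m delta) (2 powr (2*kappa))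
                    \<and> 1 \<le> 2 powr (2*kappa) \<and> 2 powr (2*kappa) < 2 powr (1 - 2/nu)"
proof -
  define Q where "Q = (2::real) powr (2*kappa)"
  have Q1: "1 \<le> Q" unfolding Q_def using kappa by (intro ge_one_powr_ge_zero) auto
  have Qlt: "Q < 2 powr (1 - 2/nu)" unfolding Q_def using kappa nu
    by (intro powr_less_mono) (auto simp: field_simps)
  have eqe: "(nu/2 - 1) / (nu/2) = 1 - 2/nu" using nu by (simp add: field_simps)
  have "1/nu > 0" using nu by simp
  hence k1: "1 - 2*kappa > 0" using kappa by linarith
  have Qk: "2 powr kappa \<le> Q" unfolding Q_def using kappa by (intro powr_mono) auto
  let ?g = "\<lambda>m. gam C kappa R J m delta"
  have nonneg: "\<forall>n\<ge>1. 0 \<le> ?g n"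
    using C by (simp add: gam_def)
  have mono: "\<forall>i j. 1 \<le> i \<longrightarrow> i \<le> j \<longrightarrow> ?g i \<le> ?g j"
  proof (intro allI impI)
    fix i j :: nat assume ij: "1 \<le> i" "i \<le> j"
    have r: "real i \<le> real j" "real i > 0" using ij by auto
    have a1: "real i powr (1-kappa) \<le> real j powr (1-kappa)"
      using r kappa k1 by (intro powr_mono2) auto
    have a2: "real i powr (1-2*kappa) \<le> real j powr (1-2*kappa)"
      using r kappa k1 by (intro powr_mono2) auto
    have "(R delta)^2 * real i + 2 * R delta * J delta * real i powr (1-kappa)
           + (J delta)^2 * real i powr (1 - 2*kappa) \<le>
          (R delta)^2 * real j + 2 * R delta * J delta * real j powr (1-kappa)
           + (J delta)^2 * real j powr (1 - 2*kappa)"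
      using a1 a2 r RJ by (intro add_mono mult_left_mono) auto
    hence "C * ((R delta)^2 * real i + 2 * R delta * J delta * real i powr (1-kappa)
           + (J delta)^2 * real i powr (1 - 2*kappa)) \<le>
          C * ((R delta)^2 * real j + 2 * R delta * J delta * real j powr (1-kappa)
           + (J delta)^2 * real j powr (1 - 2*kappa))" using C by (rule mult_left_mono)
    thus "?g i \<le> ?g j" using gam_expand[of i] gam_expand[of j] ij
      by simp
  qed
  have sub: "\<forall>i j. 1 \<le> i \<longrightarrow> i < j \<longrightarrow> ?g i + ?g (j - i) \<le> Q * ?g j"
  proof (intro allI impI)
    fix i j :: nat assume ij: "1 \<le> i" "i < j"
    define a where "a = real i"
    define b where "b = real (j - i)"
    have ab: "a > 0" "b > 0" "real j = a + b" using ij unfolding a_def b_def by auto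
    have t1: "a + b \<le> Q * (a+b)" using Q1 ab by simp
    have t2: "a powr (1-kappa) + b powr (1-kappa) \<le> Q * (a+b) powr (1-kappa)"
    proof -
      have "a powr (1-kappa) + b powr (1-kappa) \<le> 2 powr (1-(1-kappa)) * (a+b) powr (1-kappa)"
        using conc_ineq[of "1-kappa" a b] ab k1 kappa by simp
      also have "\<dots> \<le> Q * (a+b) powr (1-kappa)" using Qk by (intro mult_right_mono) auto
      finally show ?thesis .
    qed
    have t3: "a powr (1-2*kappa) + b powr (1-2*kappa) \<le> Q * (a+b) powr (1-2*kappa)"
      using conc_ineq[of "1-2*kappa" a b] ab k1 kappa unfolding Q_def by simp
    have j1: "j - i \<ge> 1" "j \<ge> 1" using ij by auto
    let ?F = "\<lambda>x. (R delta)^2 * x + 2 * R delta * J delta * x powr (1-kappa)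
           + (J delta)^2 * x powr (1 - 2*kappa)"
    have "?F a + ?F b
       = (R delta)^2 * (a + b) + 2 * R delta * J delta * (a powr (1-kappa) + b powr (1-kappa))
           + (J delta)^2 * (a powr (1-2*kappa) + b powr (1-2*kappa))"
      by (simp add: algebra_simps)
    also have "\<dots> \<le> (R delta)^2 * (Q*(a + b)) + 2 * R delta * J delta * (Q * (a+b) powr (1-kappa))
           + (J delta)^2 * (Q * (a+b) powr (1-2*kappa))"
      using t1 t2 t3 RJ by (intro add_mono mult_left_mono) auto
    also have "\<dots> = Q * ?F (a+b)"
      by (simp add: algebra_simps)
    finally have X: "?F a + ?F b \<le> Q * ?F (a+b)" .
    have "C * ?F a + C * ?F b \<le> Q * (C * ?F (a+b))"
    proof -
      have "C * ?F a + C * ?F b = C * (?F a + ?F b)" by (simp only: distrib_left)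
      also have "\<dots> \<le> C * (Q * ?F (a+b))" using X C by (rule mult_left_mono)
      also have "\<dots> = Q * (C * ?F (a+b))" by (simp only: mult.left_commute)
      finally show ?thesis .
    qed
    moreover have "?g i = C * ?F a" using gam_expand[OF ij(1)] unfolding a_def by simp
    moreover have "?g (j-i) = C * ?F b" using gam_expand[OF j1(1)] unfolding b_def by simp
    moreover have "?g j = C * ?F (a+b)" using gam_expand[OF j1(2)] ab(3) by simp
    ultimately show "?g i + ?g (j - i) \<le> Q * ?g j" by simp
  qed
  have n2: "nu/2 > 1" using nu by simp
  have "cond_S (nu/2) ?g Q" unfolding cond_S_def eqe using n2 Q1 Qlt nonneg mono sub
    by blast
  thus ?thesis using Q1 Qlt unfolding Q_def by blast
qed


lemma part2:
  fixes kappa C :: real and R J :: "real \<Rightarrow> real"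
  assumes kappa: "0 < kappa" and C: "C \<ge> 0"
    and RJ: "R delta \<ge> 0" "J delta \<ge> 0"
  shows "\<exists>C'\<ge>0. \<forall>eps. 0 < eps \<and> eps \<le> 1 \<longrightarrow>
              limsup (\<lambda>n. ereal (gam C kappa R J (nat \<lfloor>real n * eps\<rfloor>) delta / real n))
                \<le> ereal (C' * eps)"
proof (intro exI[of _ "C * (R delta + J delta)^2"] conjI allI impI)
  define C' where "C' = C * (R delta + J delta)^2"
  show "0 \<le> C * (R delta + J delta)^2" using C by simp
  fix eps :: real assume e: "0 < eps \<and> eps \<le> 1"
  have pt: "gam C kappa R J (nat \<lfloor>real n * eps\<rfloor>) delta / real n \<le> C' * eps" for n :: nat
  proof -
    define m where "m = nat \<lfloor>real n * eps\<rfloor>"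
    have C'0: "C' \<ge> 0" unfolding C'_def using C by simp
    have mle: "real m \<le> real n * eps" unfolding m_def using e by simp
    show ?thesis
    proof (cases "n = 0 \<or> m = 0")
      case True
      then have "gam C kappa R J m delta / real n = 0" by (auto simp: gam_def)
      moreover have "0 \<le> C' * eps" using C'0 e by simp
      ultimately show ?thesis unfolding m_def by linarith
    next
      case False
      hence n: "real n > 0" and m: "m \<ge> 1" by auto
      have p1: "real m powr (-kappa) \<le> 1"
      proof -
        have "real m powr (-kappa) \<le> real m powr 0" using m kappa by (intro powr_mono) auto
        thus ?thesis using m by simp
      qed
      have p0: "real m powr (-kappa) \<ge> 0" by simp
      have "R delta + J delta * real m powr (-kappa) \<le> R delta + J delta"
        using p1 RJ by (simp add: mult_left_le)
      moreover have "0 \<le> R delta + J delta * real m powr (-kappa)" using RJ p0 by simp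
      ultimately have sq: "(R delta + J delta * real m powr (-kappa))^2 \<le> (R delta + J delta)^2"
        by (rule power_mono)
      have "gam C kappa R J m delta = C * real m * (R delta + J delta * real m powr (-kappa))^2"
        using m by (simp add: gam_def)
      also have "\<dots> \<le> C * real m * (R delta + J delta)^2"
        using sq C by (intro mult_left_mono) auto
      also have "\<dots> = C' * real m" unfolding C'_def by simp
      also have "\<dots> \<le> C' * (real n * eps)" using mle C'0 by (rule mult_left_mono)
      finally have "gam C kappa R J m delta \<le> (C' * eps) * real n" by (simp add: mult_ac)
      thus ?thesis using n unfolding m_def by (simp add: divide_le_eq)
    qed
  qed
  show "limsup (\<lambda>n. ereal (gam C kappa R J (nat \<lfloor>real n * eps\<rfloor>) delta / real n))
                \<le> ereal (C * (R delta + J delta)^2 * eps)"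
    using pt unfolding C'_def by (intro Limsup_bounded always_eventually) auto
qed

lemma part3_lim:
  fixes kappa C :: real and R J :: "real \<Rightarrow> real"
  assumes kappa: "0 < kappa"
  shows "limsup (\<lambda>n. ereal (gam C kappa R J n delta / real n)) = ereal (C * (R delta)^2)"
proof -
  have ev: "\<forall>\<^sub>F n in sequentially. C * (R delta + J delta * real n powr (-kappa))^2
              = gam C kappa R J n delta / real n"
    using eventually_ge_at_top[of "1::nat"] by eventually_elim (simp add: gam_def)
  have l0: "((\<lambda>n. real n powr (-kappa)) \<longlongrightarrow> 0) sequentially"
    using kappa by (intro tendsto_neg_powr filterlim_real_sequentially) auto
  have "((\<lambda>n. C * (R delta + J delta * real n powr (-kappa))^2) \<longlongrightarrow> C * (R delta + J delta * 0)^2) sequentially"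
    by (intro tendsto_intros l0)
  hence "((\<lambda>n. C * (R delta + J delta * real n powr (-kappa))^2) \<longlongrightarrow> C * (R delta)^2) sequentially"
    by simp
  hence "((\<lambda>n. gam C kappa R J n delta / real n) \<longlongrightarrow> C * (R delta)^2) sequentially"
    using ev by (rule Lim_transform_eventually)
  hence "((\<lambda>n. ereal (gam C kappa R J n delta / real n)) \<longlongrightarrow> ereal (C * (R delta)^2)) sequentially"
    by (rule tendsto_ereal)
  thus ?thesis by (intro lim_imp_Limsup) auto
qed

theorem lemma2p5:
  fixes nu kappa C :: real and R J :: "real \<Rightarrow> real"
  assumes nu: "nu > 2"
    and kappa: "0 < kappa" "kappa < 1/2 - 1/nu"
    and C: "C \<ge> 0"
    and RJ: "\<And>delta. delta > 0 \<Longrightarrow> R delta \<ge> 0 \<and> J delta \<ge> 0"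
  shows "(\<forall>delta>0. cond_S (nu/2) (\<lambda>m. gam C kappa R J m delta) (2 powr (2*kappa))
                    \<and> 1 \<le> 2 powr (2*kappa) \<and> 2 powr (2*kappa) < 2 powr (1 - 2/nu))
       \<and> (\<forall>delta>0. \<exists>C'\<ge>0. \<forall>eps. 0 < eps \<and> eps \<le> 1 \<longrightarrow>
              limsup (\<lambda>n. ereal (gam C kappa R J (nat \<lfloor>real n * eps\<rfloor>) delta / real n))
                \<le> ereal (C' * eps))
       \<and> ((R \<longlongrightarrow> 0) (at_right 0) \<longrightarrow>
            ((\<lambda>delta. limsup (\<lambda>n. ereal (gam C kappa R J n delta / real n)))
               \<longlongrightarrow> 0) (at_right 0))"
proof -
  have A: "\<forall>delta>0. cond_S (nu/2) (\<lambda>m. gam C kappa R J m delta) (2 powr (2*kappa))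
                    \<and> 1 \<le> 2 powr (2*kappa) \<and> 2 powr (2*kappa) < 2 powr (1 - 2/nu)"
    using part1[OF nu kappa C] RJ by blast
  have B: "\<forall>delta>0. \<exists>C'\<ge>0. \<forall>eps. 0 < eps \<and> eps \<le> 1 \<longrightarrow>
              limsup (\<lambda>n. ereal (gam C kappa R J (nat \<lfloor>real n * eps\<rfloor>) delta / real n))
                \<le> ereal (C' * eps)"
    using part2[OF kappa(1) C] RJ by blast
  have D: "((\<lambda>delta. limsup (\<lambda>n. ereal (gam C kappa R J n delta / real n))) \<longlongrightarrow> 0) (at_right 0)"
    if R0: "(R \<longlongrightarrow> 0) (at_right 0)"
  proof -
    have "((\<lambda>delta. ereal (C * (R delta)^2)) \<longlongrightarrow> ereal (C * 0^2)) (at_right 0)"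
      by (intro tendsto_ereal tendsto_intros R0)
    thus ?thesis
      unfolding part3_lim[OF kappa(1)] by (simp add: zero_ereal_def)
  qed
  show ?thesis using A B D by blast
qed

end
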